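(* For any L-primitive set $A\subset\mathbb{Z}_{>1}$, the logarithmic density $\delta(\mathrm{L}_A)=\lim_{x\to\infty}\frac{1}{\log x}\sum_{n\in\mathrm{L}_A,\,n\le x}\frac1n$ exists and equals $\sum_{a\in A}\mathrm{d}(\mathrm{L}_a)$.
   Context: For an integer $a>1$ with largest prime factor $P(a)$, $\mathrm{L}_a=\{ba: b\in\mathbb{N},\ \text{every prime } p\mid b \text{ satisfies } p\ge P(a)\}$, with natural density $\mathrm{d}(\mathrm{L}_a)=\frac1a\prod_{p<P(a)}(1-\frac1p)$; $\mathrm{L}_A=\bigcup_{a\in A}\mathrm{L}_a$. A set $A\subset\mathbb{Z}_{>1}$ is L-primitive if $a'\notin\mathrm{L}_a$ for all distinct $a,a'\in A$. *)

theory Defs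
  imports "HOL-Analysis.Analysis" "HOL-Computational_Algebra.Primes"
begin

definition gpf :: "nat \<Rightarrow> nat" where
  "gpf a = Max (prime_factors a)"

definition Lset :: "nat \<Rightarrow> nat set" where
  "Lset a = {b * a | b. b \<ge> 1 \<and> (\<forall>p. prime p \<and> p dvd b \<longrightarrow> p \<ge> gpf a)}"

definition LsetA :: "nat set \<Rightarrow> nat set" where
  "LsetA A = (\<Union>a\<in>A. Lset a)"

text \<open>Natural density of L_a, as given by the closed formula.\<close>
definition dL :: "nat \<Rightarrow> real" where
  "dL a = (1 / real a) * (\<Prod>p\<in>{p. prime p \<and> p < gpf a}. (1 - 1 / real p))"

definition L_primitive :: "nat set \<Rightarrow> bool" where
  "L_primitive A \<longleftrightarrow> (\<forall>a\<in>A. \<forall>a'\<in>A. a \<noteq> a' \<longrightarrow> a' \<notin> Lset a)"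

end

theory Submission
  imports Defs
begin

definition Tsum :: "nat set \<Rightarrow> real \<Rightarrow> real" where
  "Tsum Q y = (\<Sum>b\<in>{b. 0 < b \<and> real b \<le> y \<and> (\<forall>q\<in>Q. \<not> q dvd b)}. 1 / real b)"

lemma finite_le_real: "finite {b::nat. 0 < b \<and> real b \<le> y \<and> P b}"
  by (rule finite_subset[of _ "{..nat \<lfloor>y\<rfloor>}"]) (auto simp: le_nat_floor)

lemma real_le_of_le_nat_floor: "0 < x \<Longrightarrow> x \<le> nat \<lfloor>y\<rfloor> \<Longrightarrow> real x \<le> y"
proof -
  assume "0 < x" "x \<le> nat \<lfloor>y\<rfloor>"
  then have "int x \<le> \<lfloor>y\<rfloor>" by linarith
  then show "real x \<le> y" by linarith
qed

lemma Tsum_empty: "Tsum {} y = harm (nat \<lfloor>y\<rfloor>)"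
proof -
  have "{b. 0 < b \<and> real b \<le> y \<and> (\<forall>q\<in>{}. \<not> q dvd b)} = {1..nat \<lfloor>y\<rfloor>}"
    by (auto simp: le_nat_floor real_le_of_le_nat_floor)
  then show ?thesis unfolding Tsum_def harm_def by (simp add: inverse_eq_divide)
qed

lemma harm_le_ln: "n \<ge> 1 \<Longrightarrow> harm n \<le> 1 + ln (real n)"
proof -
  assume "n \<ge> 1"
  then obtain m where m: "n = Suc m" by (cases n) auto
  have "harm (Suc m) - ln (Suc m) \<le> harm (Suc 0) - ln (Suc 0)"
    using decseq_harm_diff_ln unfolding decseq_def by blast
  moreover have "harm 0 = (0::real)" by (simp add: harm_def)
  ultimately show ?thesis using m by (simp add: harm_Suc)
qed

lemma Tsum_empty_bounds:
  assumes "y \<ge> 1"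
  shows "ln y \<le> Tsum {} y" "Tsum {} y \<le> 1 + ln y"
proof -
  have n1: "nat \<lfloor>y\<rfloor> \<ge> 1" using assms by linarith
  have "ln y \<le> ln (real (nat \<lfloor>y\<rfloor>) + 1)"
  proof -
    have "y \<le> real (nat \<lfloor>y\<rfloor>) + 1" using assms by linarith
    moreover have "0 < y" "0 < real (nat \<lfloor>y\<rfloor>) + 1" using assms by linarith+
    ultimately show ?thesis using ln_le_cancel_iff by blast
  qed
  also have "\<dots> \<le> harm (nat \<lfloor>y\<rfloor>)" by (rule ln_le_harm)
  finally show "ln y \<le> Tsum {} y" by (simp add: Tsum_empty)
  have "harm (nat \<lfloor>y\<rfloor>) \<le> 1 + ln (real (nat \<lfloor>y\<rfloor>))" using harm_le_ln n1 by blast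
  also have "\<dots> \<le> 1 + ln y" using n1 assms by (simp add: ln_le_cancel_iff)
  finally show "Tsum {} y \<le> 1 + ln y" by (simp add: Tsum_empty)
qed

lemma Tsum_empty_lim: "((\<lambda>y. Tsum {} y / ln y) \<longlongrightarrow> 1) at_top"
proof (rule tendsto_sandwich[of "\<lambda>_. 1::real" _ _ "\<lambda>y::real. 1 + 1 / ln y"])
  show "\<forall>\<^sub>F y in at_top. 1 \<le> Tsum {} y / ln y"
    using eventually_gt_at_top[of "1::real"]
    by eventually_elim (use Tsum_empty_bounds in auto)
  show "\<forall>\<^sub>F y in at_top. Tsum {} y / ln y \<le> 1 + 1 / ln y"
    using eventually_gt_at_top[of "1::real"]
  proof eventually_elim
    case (elim y)
    then have "ln y > 0" by simp
    then show ?case using Tsum_empty_bounds(2)[of y] elim by (simp add: field_simps)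
  qed
  have "((\<lambda>x::real. inverse (ln x)) \<longlongrightarrow> 0) at_top"
    by (rule tendsto_inverse_0_at_top[OF ln_at_top])
  then have h0: "((\<lambda>y::real. 1 / ln y) \<longlongrightarrow> 0) at_top" by (simp add: inverse_eq_divide)
  then show "((\<lambda>y::real. 1 + 1 / ln y) \<longlongrightarrow> (1::real)) at_top"
  proof -
    have "((\<lambda>y::real. 1 + 1 / ln y) \<longlongrightarrow> 1 + (0::real)) at_top" by (intro tendsto_add tendsto_const h0)
    then show ?thesis by simp
  qed
qed simp


definition Sset :: "nat set \<Rightarrow> real \<Rightarrow> nat set" where
  "Sset Q y = {b. 0 < b \<and> real b \<le> y \<and> (\<forall>q\<in>Q. \<not> q dvd b)}"

lemma Tsum_Sset: "Tsum Q y = (\<Sum>b\<in>Sset Q y. 1 / real b)"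
  unfolding Tsum_def Sset_def ..

lemma finite_Sset: "finite (Sset Q y)"
  unfolding Sset_def by (rule finite_le_real)

lemma Tsum_insert:
  assumes Qp: "\<forall>p\<in>Q. prime p" and q: "prime q" "q \<notin> Q"
  shows "Tsum (insert q Q) y = Tsum Q y - Tsum Q (y / q) / q"
proof -
  have qpos: "real q > 0" using q prime_gt_0_nat by simp
  have split: "Sset Q y = Sset (insert q Q) y \<union> (\<lambda>m. q * m) ` Sset Q (y / q)"
  proof (intro equalityI subsetI)
    fix b assume b: "b \<in> Sset Q y"
    show "b \<in> Sset (insert q Q) y \<union> (\<lambda>m. q * m) ` Sset Q (y / q)"
    proof (cases "q dvd b")
      case True
      then obtain m where m: "b = q * m" by blast
      have "m \<in> Sset Q (y / q)"
        using b m qpos by (auto simp: Sset_def field_simps)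
      then show ?thesis using m by blast
    next
      case False
      then show ?thesis using b by (auto simp: Sset_def)
    qed
  next
    fix b assume b: "b \<in> Sset (insert q Q) y \<union> (\<lambda>m. q * m) ` Sset Q (y / q)"
    show "b \<in> Sset Q y"
    proof (cases "b \<in> Sset (insert q Q) y")
      case True then show ?thesis by (auto simp: Sset_def)
    next
      case False
      then obtain m where m: "b = q * m" "m \<in> Sset Q (y / q)" using b by blast
      have "\<not> p dvd q * m" if "p \<in> Q" for p
      proof
        assume "p dvd q * m"
        moreover have "prime p" using Qp that by blast
        ultimately have "p dvd q \<or> p dvd m" using prime_dvd_mult_iff by blast
        moreover have "\<not> p dvd q" using primes_dvd_imp_eq[OF \<open>prime p\<close> q(1)] q(2) that by blast
        ultimately show False using m(2) that by (auto simp: Sset_def)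
      qed
      then show ?thesis using m qpos q prime_gt_0_nat by (auto simp: Sset_def field_simps)
    qed
  qed
  have disj: "Sset (insert q Q) y \<inter> (\<lambda>m. q * m) ` Sset Q (y / q) = {}"
    by (auto simp: Sset_def)
  have inj: "inj_on (\<lambda>m. q * m) (Sset Q (y / q))"
    using qpos by (auto simp: inj_on_def)
  have "Tsum Q y = Tsum (insert q Q) y + (\<Sum>b\<in>(\<lambda>m. q * m) ` Sset Q (y / q). 1 / real b)"
    unfolding Tsum_Sset split
    by (rule sum.union_disjoint) (auto simp: finite_Sset disj)
  also have "(\<Sum>b\<in>(\<lambda>m. q * m) ` Sset Q (y / q). 1 / real b) = (\<Sum>m\<in>Sset Q (y / q). 1 / real (q * m))"
    by (rule sum.reindex[OF inj, unfolded comp_def])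
  also have "\<dots> = Tsum Q (y / q) / q"
    unfolding Tsum_Sset sum_divide_distrib by (simp add: field_simps)
  finally show ?thesis by simp
qed

lemma Tsum_lim:
  assumes "finite Q" "\<forall>p\<in>Q. prime p"
  shows "((\<lambda>y. Tsum Q y / ln y) \<longlongrightarrow> (\<Prod>p\<in>Q. 1 - 1 / real p)) at_top"
  using assms
proof (induction Q rule: finite_induct)
  case empty
  then show ?case using Tsum_empty_lim by simp
next
  case (insert q Q)
  have q: "prime q" using insert by simp
  have qpos: "real q > 1" using q prime_gt_1_nat by simp
  define L where "L = (\<Prod>p\<in>Q. 1 - 1 / real p)"
  have IH: "((\<lambda>y. Tsum Q y / ln y) \<longlongrightarrow> L) at_top" using insert L_def by simp
  have lim_div: "filterlim (\<lambda>y::real. y / q) at_top at_top"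
  proof -
    have "filterlim (\<lambda>y::real. (1 / q) * y) at_top at_top"
      using qpos by (intro filterlim_tendsto_pos_mult_at_top[OF tendsto_const] filterlim_ident) auto
    then show ?thesis by (simp add: field_simps)
  qed
  have IH2: "((\<lambda>y. Tsum Q (y / q) / ln (y / q)) \<longlongrightarrow> L) at_top"
    using filterlim_compose[OF IH lim_div] by (simp add: comp_def)
  have r: "((\<lambda>y::real. ln (y / q) / ln y) \<longlongrightarrow> 1) at_top"
  proof -
    have "((\<lambda>y::real. 1 - ln q * (1 / ln y)) \<longlongrightarrow> 1 - ln q * 0) at_top"
      by (intro tendsto_intros tendsto_divide_0[OF tendsto_const] filterlim_at_top_imp_at_infinity ln_at_top)
    moreover have "\<forall>\<^sub>F y in at_top. 1 - ln q * (1 / ln y) = ln (y / q) / ln y"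
      using eventually_gt_at_top[of "1::real"]
      by eventually_elim (use qpos in \<open>auto simp: ln_div field_simps\<close>)
    ultimately show ?thesis by (simp add: tendsto_cong)
  qed
  have "((\<lambda>y. Tsum Q y / ln y - (1 / q) * ((Tsum Q (y / q) / ln (y / q)) * (ln (y / q) / ln y)))
      \<longlongrightarrow> L - (1 / q) * (L * 1)) at_top"
    by (intro tendsto_intros IH IH2 r)
  moreover have "\<forall>\<^sub>F y in at_top. Tsum Q y / ln y - (1 / q) * ((Tsum Q (y / q) / ln (y / q)) * (ln (y / q) / ln y))
      = Tsum (insert q Q) y / ln y"
    using eventually_gt_at_top[of "real q"]
  proof eventually_elim
    case (elim y)
    then have "y / q > 1" using qpos by (simp add: field_simps)
    then have l1: "ln (y / q) > 0" by simp
    have l2: "ln y > 0" using elim qpos by simp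
    show ?case using Tsum_insert[of Q q y] insert l1 l2 by (simp add: field_simps)
  qed
  moreover have "L - (1 / q) * (L * 1) = (\<Prod>p\<in>insert q Q. 1 - 1 / real p)"
    using insert L_def by (simp add: algebra_simps)
  ultimately show ?case by (simp add: tendsto_cong)
qed


definition Msm :: "nat set \<Rightarrow> nat \<Rightarrow> nat set" where
  "Msm Q K = {n. 0 < n \<and> (\<forall>p. prime p \<and> p dvd n \<longrightarrow> p \<in> Q) \<and> (\<forall>p\<in>Q. multiplicity p n < K)}"

lemma Msm_empty: "Msm {} K = {1}"
proof (intro equalityI subsetI)
  fix n assume n: "n \<in> Msm {} K"
  show "n \<in> {1}"
  proof (rule ccontr)
    assume "n \<notin> {1}"
    then obtain p where "prime p" "p dvd n" using prime_factor_nat by auto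
    then show False using n by (auto simp: Msm_def)
  qed
next
  fix n assume "n \<in> {1::nat}"
  then show "n \<in> Msm {} K" by (auto simp: Msm_def)
qed

lemma Msm_insert:
  assumes Qp: "\<forall>p\<in>Q. prime p" and q: "prime q" "q \<notin> Q"
  shows "Msm (insert q Q) K = (\<lambda>(k, m). q ^ k * m) ` ({..<K} \<times> Msm Q K)"
proof (intro equalityI subsetI)
  fix n assume n: "n \<in> Msm (insert q Q) K"
  define k where "k = multiplicity q n"
  define m where "m = n div q ^ k"
  have npos: "n > 0" using n by (simp add: Msm_def)
  have kK: "k < K" using n by (simp add: Msm_def k_def)
  have nqm: "n = q ^ k * m" using multiplicity_dvd[of q n] by (simp add: m_def k_def)
  have mpos: "m > 0" using npos nqm by (cases "m = 0") auto
  have "q \<noteq> Suc 0" using q prime_gt_1_nat by fastforce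
  then have nq: "\<not> q dvd m" using multiplicity_decompose[of n q] npos
    by (simp add: m_def k_def)
  have "m \<in> Msm Q K"
    unfolding Msm_def
  proof (intro CollectI conjI allI impI ballI)
    fix p assume p: "prime p \<and> p dvd m"
    then have "p dvd n" using nqm by simp
    then have "p \<in> insert q Q" using n p by (auto simp: Msm_def)
    then show "p \<in> Q" using p nq by auto
  next
    fix p assume p: "p \<in> Q"
    have "multiplicity p m \<le> multiplicity p n"
      by (rule dvd_imp_multiplicity_le) (use nqm npos in auto)
    also have "\<dots> < K" using n p by (auto simp: Msm_def)
    finally show "multiplicity p m < K" .
  qed (use mpos in auto)
  then show "n \<in> (\<lambda>(k, m). q ^ k * m) ` ({..<K} \<times> Msm Q K)"
    using kK nqm by force
next
  fix n assume "n \<in> (\<lambda>(k, m). q ^ k * m) ` ({..<K} \<times> Msm Q K)"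
  then obtain k m where km: "k < K" "m \<in> Msm Q K" "n = q ^ k * m" by auto
  have mpos: "m > 0" using km by (simp add: Msm_def)
  have qpos: "q > 0" using q prime_gt_0_nat by blast
  have nq: "\<not> q dvd m" using km q by (auto simp: Msm_def)
  show "n \<in> Msm (insert q Q) K"
    unfolding Msm_def
  proof (intro CollectI conjI allI impI ballI)
    show "0 < n" using km mpos qpos by simp
  next
    fix p assume p: "prime p \<and> p dvd n"
    then have "p dvd q ^ k \<or> p dvd m" using km prime_dvd_mult_iff by blast
    then show "p \<in> insert q Q"
    proof
      assume "p dvd q ^ k"
      then have "p dvd q" using p prime_dvd_power by blast
      then show ?thesis using primes_dvd_imp_eq p q by blast
    next
      assume "p dvd m" then show ?thesis using km p by (auto simp: Msm_def)
    qed
  next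
    fix p assume p: "p \<in> insert q Q"
    have pp: "prime p" using p Qp q by auto
    have "multiplicity p n = multiplicity p (q ^ k) + multiplicity p m"
      using km mpos qpos pp by (simp add: prime_elem_multiplicity_mult_distrib)
    then show "multiplicity p n < K"
    proof (cases "p = q")
      case True
      then show ?thesis using \<open>multiplicity p n = _\<close> nq km q
        by (simp add: not_dvd_imp_multiplicity_0)
    next
      case False
      then have "multiplicity p (q ^ k) = 0" using multiplicity_distinct_prime_power pp q by blast
      moreover have "p \<in> Q" using p False by auto
      ultimately show ?thesis using \<open>multiplicity p n = _\<close> km by (auto simp: Msm_def)
    qed
  qed
qed

lemma Msm_inj:
  assumes q: "prime q" "q \<notin> Q"
  shows "inj_on (\<lambda>(k, m). q ^ k * m) ({..<K} \<times> Msm Q K)"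
proof (intro inj_onI; clarify)
  fix k m j m'
  assume m: "m \<in> Msm Q K" and m': "m' \<in> Msm Q K" and eq: "q ^ k * m = q ^ j * m'"
  have mpos: "m > 0" "m' > 0" using m m' by (auto simp: Msm_def)
  have qpos: "q > 0" using q prime_gt_0_nat by blast
  have nq: "\<not> q dvd m" "\<not> q dvd m'" using m m' q by (auto simp: Msm_def)
  have "multiplicity q (q ^ k * m) = k"
    using mpos qpos q nq by (simp add: prime_elem_multiplicity_mult_distrib not_dvd_imp_multiplicity_0)
  moreover have "multiplicity q (q ^ j * m') = j"
    using mpos qpos q nq by (simp add: prime_elem_multiplicity_mult_distrib not_dvd_imp_multiplicity_0)
  ultimately have "k = j" using eq by simp
  then show "k = j \<and> m = m'" using eq qpos by simp
qed

lemma mult_fun_power: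
  assumes "\<And>m n. f (m * n) = (f m * f n :: real)" "f 1 = 1"
  shows "f (q ^ k) = f q ^ k"
  by (induction k) (simp_all add: assms)

lemma euler_fin:
  fixes f :: "nat \<Rightarrow> real"
  assumes "finite Q" "\<forall>p\<in>Q. prime p"
    and fm: "\<And>m n. f (m * n) = f m * f n" and f1: "f 1 = 1"
  shows "finite (Msm Q K) \<and> (\<Prod>p\<in>Q. \<Sum>k<K. f p ^ k) = (\<Sum>n\<in>Msm Q K. f n)"
  using assms(1,2)
proof (induction Q rule: finite_induct)
  case empty
  have "f (Suc 0) = 1" using f1 by simp
  then show ?case by (simp add: Msm_empty)
next
  case (insert q Q)
  have Qp: "\<forall>p\<in>Q. prime p" and q: "prime q" using insert by auto
  have IH: "finite (Msm Q K)" "(\<Prod>p\<in>Q. \<Sum>k<K. f p ^ k) = (\<Sum>n\<in>Msm Q K. f n)"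
    using insert Qp by auto
  have "(\<Sum>n\<in>Msm (insert q Q) K. f n) = (\<Sum>(k, m)\<in>{..<K} \<times> Msm Q K. f (q ^ k * m))"
    unfolding Msm_insert[OF Qp q insert(2)]
    by (subst sum.reindex[OF Msm_inj[OF q insert(2)]]) (simp add: case_prod_unfold)
  also have "\<dots> = (\<Sum>k<K. \<Sum>m\<in>Msm Q K. f q ^ k * f m)"
    by (simp add: sum.cartesian_product fm mult_fun_power[OF fm f1])
  also have "\<dots> = (\<Sum>k<K. f q ^ k) * (\<Sum>m\<in>Msm Q K. f m)"
    by (simp add: sum_product)
  finally have "(\<Sum>n\<in>Msm (insert q Q) K. f n) = (\<Prod>p\<in>insert q Q. \<Sum>k<K. f p ^ k)"
    using insert IH by simp
  moreover have "finite (Msm (insert q Q) K)"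
    unfolding Msm_insert[OF Qp q insert(2)] using IH by simp
  ultimately show ?case by simp
qed


lemma zeta_step:
  fixes t s :: real
  assumes t: "t \<ge> 2" and s: "s > 1"
  shows "(s - 1) * t powr (- s) \<le> (t - 1) powr (1 - s) - t powr (1 - s)"
proof -
  have tpos: "t > 0" "t - 1 > 0" using t by auto
  have "ln ((t - 1) / t) \<le> (t - 1) / t - 1" using tpos by (intro ln_le_minus_one) auto
  also have "(t - 1) / t - 1 = - (1 / t)" using tpos by (simp add: field_simps)
  finally have "ln (t - 1) - ln t \<le> - (1 / t)" using tpos by (simp add: ln_div)
  then have "(1 - s) * ln (t - 1) \<ge> (1 - s) * ln t + (s - 1) / t"
  proof -
    assume h: "ln (t - 1) - ln t \<le> - (1 / t)"
    have "(s - 1) * (ln (t - 1) - ln t) \<le> (s - 1) * (- (1 / t))"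
      using h s by (intro mult_left_mono) auto
    then show ?thesis by (simp add: algebra_simps)
  qed
  then have "exp ((1 - s) * ln t + (s - 1) / t) \<le> exp ((1 - s) * ln (t - 1))" by simp
  then have "exp ((1 - s) * ln t) * exp ((s - 1) / t) \<le> (t - 1) powr (1 - s)"
    using tpos by (simp add: powr_def exp_add mult.commute)
  moreover have "exp ((s - 1) / t) \<ge> 1 + (s - 1) / t" by (rule exp_ge_add_one_self)
  ultimately have "t powr (1 - s) * (1 + (s - 1) / t) \<le> (t - 1) powr (1 - s)"
    using tpos by (smt (verit, best) exp_gt_zero mult_left_mono powr_def)
  moreover have "t powr (1 - s) = t * t powr (- s)"
    using powr_add[of t 1 "-s"] tpos by simp
  moreover have "t powr (1 - s) * (1 + (s - 1) / t) = t powr (1 - s) + (s - 1) * t powr (- s)"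
    using \<open>t powr (1 - s) = t * t powr (- s)\<close> tpos by (simp add: field_simps)
  ultimately show ?thesis by linarith
qed

lemma zeta_partial:
  fixes s :: real
  assumes s: "s > 1" and N: "N \<ge> 1"
  shows "(\<Sum>n\<in>{1..N}. real n powr (- s)) \<le> s / (s - 1) - real N powr (1 - s) / (s - 1)"
  using N
proof (induction N rule: dec_induct)
  case base
  have "s / (s - 1) - 1 / (s - 1) = 1" using s by (simp add: diff_divide_distrib[symmetric])
  then show ?case by simp
next
  case (step N)
  have "real (Suc N) powr (- s) \<le> (real N powr (1 - s) - real (Suc N) powr (1 - s)) / (s - 1)"
    using zeta_step[of "real (Suc N)" s] s step by (simp add: field_simps)
  then have "real (Suc N) powr (- s) \<le> real N powr (1 - s) / (s - 1) - real (Suc N) powr (1 - s) / (s - 1)"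
    by (simp add: diff_divide_distrib)
  moreover have "(\<Sum>n\<in>{1..Suc N}. real n powr (- s)) = (\<Sum>n\<in>{1..N}. real n powr (- s)) + real (Suc N) powr (- s)"
    using step by simp
  ultimately show ?case using step by linarith
qed

lemma zeta_fin:
  fixes s :: real
  assumes s: "s > 1" and M: "finite M" "\<forall>n\<in>M. n > 0"
  shows "(\<Sum>n\<in>M. real n powr (- s)) \<le> s / (s - 1)"
proof (cases "M = {}")
  case True then show ?thesis using s by simp
next
  case False
  define N where "N = Max M"
  have N1: "N \<ge> 1" using M False by (simp add: N_def Max_ge_iff) (meson Suc_le_eq ex_in_conv)
  have "M \<subseteq> {1..N}" using M by (auto simp: N_def Suc_le_eq)
  then have "(\<Sum>n\<in>M. real n powr (- s)) \<le> (\<Sum>n\<in>{1..N}. real n powr (- s))"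
    by (intro sum_mono2) auto
  also have "\<dots> \<le> s / (s - 1) - real N powr (1 - s) / (s - 1)" by (rule zeta_partial[OF s N1])
  also have "\<dots> \<le> s / (s - 1)" using s by simp
  finally show ?thesis .
qed

lemma euler_upper:
  fixes f :: "nat \<Rightarrow> real"
  assumes "finite Q" "\<forall>p\<in>Q. prime p"
    and fm: "\<And>m n. f (m * n) = f m * f n" and f1: "f 1 = 1"
    and f0: "\<And>n. f n \<ge> 0" and fp: "\<And>p. p \<in> Q \<Longrightarrow> f p < 1"
    and B: "B \<subseteq> Msm Q K"
  shows "(\<Sum>n\<in>B. f n) \<le> (\<Prod>p\<in>Q. 1 / (1 - f p))"
proof -
  have E: "finite (Msm Q K)" "(\<Prod>p\<in>Q. \<Sum>k<K. f p ^ k) = (\<Sum>n\<in>Msm Q K. f n)"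
    using euler_fin[OF assms(1,2) fm f1] by auto
  have "(\<Sum>n\<in>B. f n) \<le> (\<Sum>n\<in>Msm Q K. f n)"
    by (intro sum_mono2 E B f0)
  also have "\<dots> = (\<Prod>p\<in>Q. \<Sum>k<K. f p ^ k)" using E by simp
  also have "\<dots> \<le> (\<Prod>p\<in>Q. 1 / (1 - f p))"
  proof (intro prod_mono conjI)
    fix p assume p: "p \<in> Q"
    show "0 \<le> (\<Sum>k<K. f p ^ k)" using f0 by (intro sum_nonneg) simp
    have "(\<Sum>k<K. f p ^ k) = (1 - f p ^ K) / (1 - f p)"
      using fp[OF p] by (subst sum_gp_strict) auto
    also have "\<dots> \<le> 1 / (1 - f p)"
      using fp[OF p] f0[of p] by (intro divide_right_mono) auto
    finally show "(\<Sum>k<K. f p ^ k) \<le> 1 / (1 - f p)" .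
  qed
  finally show ?thesis .
qed

lemma euler_zeta:
  fixes s :: real
  assumes "finite Q" "\<forall>p\<in>Q. prime p" and s: "s > 1"
  shows "(\<Prod>p\<in>Q. 1 / (1 - real p powr (- s))) \<le> s / (s - 1)"
proof -
  define f where "f n = real n powr (- s)" for n
  have fm: "\<And>m n. f (m * n) = f m * f n" by (simp add: f_def powr_mult)
  have f1: "f 1 = 1" by (simp add: f_def)
  have fp: "0 \<le> f p \<and> f p < 1" if "p \<in> Q" for p
  proof -
    have "real p > 1" using assms(2) that prime_gt_1_nat by auto
    then have "real p powr s > 1" using s powr_less_mono[of 0 s "real p"] by simp
    then have "1 / real p powr s < 1" by (simp add: divide_less_eq)
    then show ?thesis by (simp add: f_def powr_minus divide_inverse)
  qed
  have lim: "(\<lambda>K. \<Prod>p\<in>Q. \<Sum>k<K. f p ^ k) \<longlonglongrightarrow> (\<Prod>p\<in>Q. 1 / (1 - f p))"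
  proof (intro tendsto_prod)
    fix p assume "p \<in> Q"
    then have "(\<lambda>k. f p ^ k) sums (1 / (1 - f p))" using fp by (intro geometric_sums) auto
    then show "(\<lambda>K. \<Sum>k<K. f p ^ k) \<longlonglongrightarrow> 1 / (1 - f p)" by (simp add: sums_def)
  qed
  have bound: "(\<Prod>p\<in>Q. \<Sum>k<K. f p ^ k) \<le> s / (s - 1)" for K
  proof -
    have E: "finite (Msm Q K)" "(\<Prod>p\<in>Q. \<Sum>k<K. f p ^ k) = (\<Sum>n\<in>Msm Q K. f n)"
      using euler_fin[OF assms(1,2) fm f1] by auto
    have "(\<Sum>n\<in>Msm Q K. f n) \<le> s / (s - 1)" unfolding f_def
      by (rule zeta_fin[OF s E(1)]) (auto simp: Msm_def)
    then show ?thesis using E(2) by linarith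
  qed
  have "(\<Prod>p\<in>Q. 1 / (1 - f p)) \<le> s / (s - 1)"
    by (rule LIMSEQ_le_const2[OF lim]) (use bound in auto)
  then show ?thesis by (simp add: f_def)
qed


lemma pow_dvd_fact_mult: "(p::nat) > 0 \<Longrightarrow> p ^ k dvd fact (p * k)"
proof (induction k)
  case 0 then show ?case by simp
next
  case (Suc k)
  define m where "m = p * k + p - 1"
  have m: "p * Suc k = Suc m" using Suc.prems by (simp add: m_def)
  have "fact (p * k) dvd (fact m :: nat)" by (intro fact_dvd) (use Suc.prems in \<open>simp add: m_def\<close>)
  then have "p ^ k dvd (fact m :: nat)" using Suc.IH Suc.prems dvd_trans by blast
  moreover have "p dvd Suc m" using m by (metis dvd_triv_left)
  ultimately have "p * p ^ k dvd Suc m * (fact m :: nat)" by (intro mult_dvd_mono)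
  then show ?case using m by (simp add: fact_Suc)
qed

lemma pow_dvd_fact: "(p::nat) > 0 \<Longrightarrow> p ^ (n div p) dvd fact n"
proof -
  assume p: "p > 0"
  have "fact (p * (n div p)) dvd (fact n :: nat)" by (intro fact_dvd) simp
  then show ?thesis using pow_dvd_fact_mult[OF p, of "n div p"] dvd_trans by blast
qed

lemma prod_primes_dvd:
  assumes "finite P" "\<forall>p\<in>P. prime (p::nat)" "\<forall>p\<in>P. p ^ e p dvd m"
  shows "(\<Prod>p\<in>P. p ^ e p) dvd m"
  using assms
proof (induction P rule: finite_induct)
  case empty then show ?case by simp
next
  case (insert q P)
  have "coprime (q ^ e q) (\<Prod>p\<in>P. p ^ e p)"
  proof (intro prod_coprime_right)
    fix p assume "p \<in> P"
    then have "coprime q p" using insert by (intro primes_coprime) auto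
    then show "coprime (q ^ e q) (p ^ e p)" by simp
  qed
  then show ?case using insert by (simp add: divides_mult)
qed

lemma chebyshev_weak:
  assumes n: "n \<ge> 1"
  shows "(\<Sum>p\<in>{p. prime p \<and> p \<le> n}. ln (real p) / real p) \<le> 2 * ln (real n)"
proof -
  define P where "P = {p. prime p \<and> p \<le> n}"
  have finP: "finite P" unfolding P_def by (rule finite_subset[of _ "{..n}"]) auto
  define D where "D = (\<Prod>p\<in>P. p ^ (n div p))"
  have "D dvd fact n" unfolding D_def
    by (rule prod_primes_dvd[OF finP]) (auto simp: P_def pow_dvd_fact prime_gt_0_nat)
  then have "D \<le> fact n" by (intro dvd_imp_le) auto
  also have "fact n \<le> n ^ n" by (rule fact_le_power[where 'a=nat, simplified])
  finally have DL: "real D \<le> real n ^ n" by (metis of_nat_le_iff of_nat_power)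
  have Dpos: "real D > 0" unfolding D_def using prime_gt_0_nat by (auto simp: P_def intro!: prod_pos)
  have "ln (real D) = (\<Sum>p\<in>P. real (n div p) * ln (real p))"
    unfolding D_def of_nat_prod of_nat_power using prime_gt_0_nat
    by (subst ln_prod) (auto simp: P_def ln_realpow)
  moreover have "ln (real D) \<le> real n * ln (real n)"
    using DL Dpos n by (metis ln_le_cancel_iff ln_realpow of_nat_0_less_iff zero_less_power
        less_le_trans order.refl of_nat_1 of_nat_mono order.strict_trans1 zero_less_one)
  ultimately have A: "(\<Sum>p\<in>P. real (n div p) * ln (real p)) \<le> real n * ln (real n)" by simp
  have "(\<Sum>p\<in>P. (real n / 2) * (ln (real p) / real p)) \<le> (\<Sum>p\<in>P. real (n div p) * ln (real p))"
  proof (intro sum_mono)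
    fix p assume p: "p \<in> P"
    have pp: "p > 0" "p \<le> n" using p prime_gt_0_nat by (auto simp: P_def)
    have "n div p > 0" using pp by (simp add: div_greater_zero_iff)
    then have "n div p \<ge> 1" by simp
    have "n = p * (n div p) + n mod p" by simp
    moreover have "n mod p < p" using pp by simp
    moreover have "p \<le> p * (n div p)" using \<open>n div p \<ge> 1\<close> by simp
    ultimately have "n \<le> 2 * p * (n div p)" by linarith
    then have "real n \<le> 2 * real p * real (n div p)" by (metis of_nat_le_iff of_nat_mult of_nat_numeral)
    then have "real n / 2 / real p \<le> real (n div p)" using pp by (simp add: field_simps)
    moreover have "ln (real p) \<ge> 0" using pp by simp
    ultimately have "(real n / 2 / real p) * ln (real p) \<le> real (n div p) * ln (real p)"
      by (intro mult_right_mono)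
    then show "(real n / 2) * (ln (real p) / real p) \<le> real (n div p) * ln (real p)" by simp
  qed
  then have "(real n / 2) * (\<Sum>p\<in>P. ln (real p) / real p) \<le> real n * ln (real n)"
    using A by (simp add: sum_distrib_left)
  then show ?thesis using n unfolding P_def[symmetric] by (simp add: field_simps)
qed


lemma mertens_factor:
  fixes x u :: real
  assumes x: "0 < x" "x \<le> 1/2" and u: "u \<ge> 0"
  shows "1 / (1 - x) \<le> (1 / (1 - x * exp (- u))) * exp (2 * x * u)"
proof -
  define e where "e = exp (- u)"
  define E where "E = exp (2 * x * u)"
  have e1: "e \<ge> 1 - u" unfolding e_def using exp_ge_add_one_self[of "-u"] by simp
  have e2: "e \<le> 1" "e > 0" unfolding e_def using u by auto
  have E1: "E \<ge> 1 + 2 * x * u" unfolding E_def by (rule exp_ge_add_one_self)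
  have xe: "x * e \<le> x" using e2 x by (simp add: mult_left_le)
  then have pos: "1 - x * e > 0" using x by linarith
  have "(1 - x) * E \<ge> (1 - x) * (1 + 2 * x * u)" using E1 x by (intro mult_left_mono) auto
  moreover have "(1 - x) * (2 * x * u) \<ge> x * u"
  proof -
    have "x * u \<ge> 0" using x u by simp
    then have "(1 - x) * 2 * (x * u) \<ge> 1 * (x * u)" using x by (intro mult_right_mono) auto
    then show ?thesis by (simp add: algebra_simps)
  qed
  moreover have "x * e \<ge> x * (1 - u)" using e1 x by (intro mult_left_mono) auto
  ultimately have "1 - x * e \<le> (1 - x) * E" by (simp add: algebra_simps)
  then have "1 / (1 - x) \<le> E / (1 - x * e)" using pos x by (simp add: field_simps)
  then show ?thesis by (simp add: e_def E_def)
qed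

definition Pi_m :: "real \<Rightarrow> real" where
  "Pi_m z = (\<Prod>p\<in>{p. prime p \<and> real p \<le> z}. 1 / (1 - 1 / real p))"

lemma finite_primes_le_real: "finite {p::nat. prime p \<and> real p \<le> z}"
  by (rule finite_subset[of _ "{..nat \<lfloor>z\<rfloor>}"]) (auto simp: le_nat_floor)

lemma mertens:
  assumes z: "z \<ge> 2"
  shows "Pi_m z \<le> exp 4 * (1 + ln z)"
proof -
  define L where "L = ln z"
  have Lpos: "L > 0" using z by (simp add: L_def)
  define s where "s = 1 + 1 / L"
  have s1: "s > 1" using Lpos by (simp add: s_def)
  define Q where "Q = {p::nat. prime p \<and> real p \<le> z}"
  have finQ: "finite Q" unfolding Q_def by (rule finite_primes_le_real)
  have Qp: "\<forall>p\<in>Q. prime p" by (simp add: Q_def)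
  have fac: "1 / (1 - 1 / real p) \<le> (1 / (1 - real p powr (- s))) * exp (2 * (ln (real p) / real p) / L)"
    if p: "p \<in> Q" for p
  proof -
    have p2: "real p \<ge> 2" using p prime_ge_2_nat by (auto simp: Q_def)
    define u where "u = ln (real p) / L"
    have u0: "u \<ge> 0" using p2 Lpos by (simp add: u_def)
    have "real p powr (- s) = exp (- s * ln (real p))" using p2 by (simp add: powr_def)
    also have "- s * ln (real p) = - ln (real p) + - u" by (simp add: s_def u_def field_simps)
    also have "exp (- ln (real p) + - u) = (1 / real p) * exp (- u)"
    proof -
      have "exp (- ln (real p)) = 1 / real p" using p2 by (simp add: exp_minus inverse_eq_divide)
      then show ?thesis by (simp only: exp_add)
    qed
    finally have ps: "real p powr (- s) = (1 / real p) * exp (- u)" .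
    have "2 * (ln (real p) / real p) / L = 2 * (1 / real p) * u" by (simp add: u_def field_simps)
    then show ?thesis unfolding ps using mertens_factor[of "1 / real p" u] p2 u0 by simp
  qed
  have "Pi_m z \<le> (\<Prod>p\<in>Q. (1 / (1 - real p powr (- s))) * exp (2 * (ln (real p) / real p) / L))"
    unfolding Pi_m_def Q_def[symmetric]
  proof (intro prod_mono conjI fac)
    fix p assume "p \<in> Q"
    then have "real p \<ge> 2" using prime_ge_2_nat by (auto simp: Q_def)
    then show "0 \<le> 1 / (1 - 1 / real p)" by (simp add: field_simps)
  qed
  also have "\<dots> = (\<Prod>p\<in>Q. 1 / (1 - real p powr (- s))) * exp (\<Sum>p\<in>Q. 2 * (ln (real p) / real p) / L)"
    by (subst prod.distrib) (simp only: exp_sum[OF finQ])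
  also have "\<dots> \<le> (1 + L) * exp 4"
  proof (intro mult_mono)
    have "(\<Prod>p\<in>Q. 1 / (1 - real p powr (- s))) \<le> s / (s - 1)" by (rule euler_zeta[OF finQ Qp s1])
    also have "s / (s - 1) = 1 + L" using Lpos by (simp add: s_def field_simps)
    finally show "(\<Prod>p\<in>Q. 1 / (1 - real p powr (- s))) \<le> 1 + L" .
    have Qeq: "Q = {p. prime p \<and> p \<le> nat \<lfloor>z\<rfloor>}" unfolding Q_def using z
      by (auto simp: le_nat_floor real_le_of_le_nat_floor prime_gt_0_nat)
    then have "(\<Sum>p\<in>Q. ln (real p) / real p) \<le> 2 * ln (real (nat \<lfloor>z\<rfloor>))"
    proof -
      have "nat \<lfloor>z\<rfloor> \<ge> 1" using z by linarith
      then show ?thesis using chebyshev_weak[of "nat \<lfloor>z\<rfloor>"] Qeq by simp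
    qed
    also have "\<dots> \<le> 2 * L" using z by (simp add: L_def)
    finally have S2: "(\<Sum>p\<in>Q. ln (real p) / real p) \<le> 2 * L" .
    have eq: "(\<Sum>p\<in>Q. 2 * (ln (real p) / real p) / L) = (2 / L) * (\<Sum>p\<in>Q. ln (real p) / real p)"
      by (subst sum_distrib_left) (simp add: field_simps)
    have "(2 / L) * (\<Sum>p\<in>Q. ln (real p) / real p) \<le> (2 / L) * (2 * L)"
      using S2 Lpos by (intro mult_left_mono) auto
    then have "(\<Sum>p\<in>Q. 2 * (ln (real p) / real p) / L) \<le> 4"
      using Lpos unfolding eq by simp
    then show "exp (\<Sum>p\<in>Q. 2 * (ln (real p) / real p) / L) \<le> exp 4" by simp
    show "0 \<le> 1 + L" using Lpos by simp
    show "0 \<le> exp (\<Sum>p\<in>Q. 2 * (ln (real p) / real p) / L)" by simp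
  qed
  finally show ?thesis by (simp add: L_def mult.commute)
qed


lemma gpf_props:
  assumes "a > (1::nat)"
  shows "prime (gpf a)" "gpf a dvd a" "\<And>p. prime p \<Longrightarrow> p dvd a \<Longrightarrow> p \<le> gpf a" "gpf a \<le> a"
proof -
  obtain p where p: "prime p" "p dvd a" using prime_factor_nat[of a] assms by auto
  have "p \<in> prime_factors a" using p assms by (auto simp: in_prime_factors_iff)
  then have ne: "prime_factors a \<noteq> {}" by blast
  have mem: "gpf a \<in> prime_factors a" unfolding gpf_def using ne by (intro Max_in) auto
  then show "prime (gpf a)" "gpf a dvd a" by (auto simp: in_prime_factors_iff)
  show "\<And>p. prime p \<Longrightarrow> p dvd a \<Longrightarrow> p \<le> gpf a"
    unfolding gpf_def using assms by (intro Max_ge) (auto simp: in_prime_factors_iff)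
  show "gpf a \<le> a" using \<open>gpf a dvd a\<close> assms by (intro dvd_imp_le) auto
qed

definition Qa :: "nat \<Rightarrow> nat set" where
  "Qa a = {p. prime p \<and> p < gpf a}"

lemma Qa_finite: "finite (Qa a)"
  unfolding Qa_def by (rule finite_subset[of _ "{..<gpf a}"]) auto

lemma Qa_prime: "\<forall>p\<in>Qa a. prime p" by (simp add: Qa_def)

lemma dL_Qa: "dL a = (1 / real a) * (\<Prod>p\<in>Qa a. 1 - 1 / real p)"
  unfolding dL_def Qa_def ..

lemma dL_nonneg: "dL a \<ge> 0"
proof -
  have "0 \<le> 1 - 1 / real p" if "prime p" for p
  proof -
    have "real p \<ge> 1" using that prime_gt_0_nat by (simp add: Suc_le_eq)
    then show ?thesis by (simp add: divide_le_eq)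
  qed
  then show ?thesis unfolding dL_def by (intro mult_nonneg_nonneg prod_nonneg) auto
qed

lemma rough_iff: "(\<forall>p. prime p \<and> p dvd b \<longrightarrow> p \<ge> gpf a) \<longleftrightarrow> (\<forall>q\<in>Qa a. \<not> q dvd b)"
  unfolding Qa_def by (auto simp: not_le)

lemma Lset_ge: "n \<in> Lset a \<Longrightarrow> a \<le> n"
  unfolding Lset_def by auto

lemma Lset_le_eq:
  assumes "a > 0"
  shows "{n \<in> Lset a. real n \<le> x} = (\<lambda>b. b * a) ` Sset (Qa a) (x / a)"
proof (intro equalityI subsetI)
  fix n assume "n \<in> {n \<in> Lset a. real n \<le> x}"
  then obtain b where b: "n = b * a" "b \<ge> 1" "\<forall>p. prime p \<and> p dvd b \<longrightarrow> p \<ge> gpf a" "real n \<le> x"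
    unfolding Lset_def by blast
  have "b \<in> Sset (Qa a) (x / a)"
    using b assms rough_iff[of b a] by (auto simp: Sset_def field_simps)
  then show "n \<in> (\<lambda>b. b * a) ` Sset (Qa a) (x / a)" using b by blast
next
  fix n assume "n \<in> (\<lambda>b. b * a) ` Sset (Qa a) (x / a)"
  then obtain b where b: "n = b * a" "b \<in> Sset (Qa a) (x / a)" by blast
  then show "n \<in> {n \<in> Lset a. real n \<le> x}"
    using assms rough_iff[of b a] by (auto simp: Sset_def Lset_def field_simps)
qed

lemma Lset_sum:
  assumes "a > 0"
  shows "(\<Sum>n\<in>{n \<in> Lset a. real n \<le> x}. 1 / real n) = Tsum (Qa a) (x / a) / real a"
proof -
  have inj: "inj_on (\<lambda>b. b * a) (Sset (Qa a) (x / a))" using assms by (auto simp: inj_on_def)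
  show ?thesis
    unfolding Lset_le_eq[OF assms] sum.reindex[OF inj] Tsum_Sset sum_divide_distrib
    by (simp add: comp_def)
qed

lemma finite_Lset_le: "finite {n \<in> Lset a. real n \<le> x}"
  by (rule finite_subset[of _ "{..nat \<lfloor>x\<rfloor>}"]) (auto simp: le_nat_floor)

definition gfun :: "nat \<Rightarrow> real \<Rightarrow> real" where
  "gfun a x = (1 / ln x) * (\<Sum>n\<in>{n \<in> Lset a. real n \<le> x}. 1 / real n)"

lemma gfun_lim:
  assumes "a > 1"
  shows "(gfun a \<longlongrightarrow> dL a) at_top"
proof -
  define W where "W = (\<Prod>p\<in>Qa a. 1 - 1 / real p)"
  have apos: "real a > 1" using assms by simp
  have IH: "((\<lambda>y. Tsum (Qa a) y / ln y) \<longlongrightarrow> W) at_top"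
    unfolding W_def by (rule Tsum_lim[OF Qa_finite Qa_prime])
  have lim_div: "filterlim (\<lambda>y::real. y / a) at_top at_top"
  proof -
    have "filterlim (\<lambda>y::real. (1 / a) * y) at_top at_top"
      using apos by (intro filterlim_tendsto_pos_mult_at_top[OF tendsto_const] filterlim_ident) auto
    then show ?thesis by (simp add: field_simps)
  qed
  have IH2: "((\<lambda>y. Tsum (Qa a) (y / a) / ln (y / a)) \<longlongrightarrow> W) at_top"
    using filterlim_compose[OF IH lim_div] by (simp add: comp_def)
  have r: "((\<lambda>y::real. ln (y / a) / ln y) \<longlongrightarrow> 1) at_top"
  proof -
    have "((\<lambda>x::real. inverse (ln x)) \<longlongrightarrow> 0) at_top"
      by (rule tendsto_inverse_0_at_top[OF ln_at_top])
    then have h0: "((\<lambda>y::real. 1 / ln y) \<longlongrightarrow> 0) at_top" by (simp add: inverse_eq_divide)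
    have "((\<lambda>y::real. 1 - ln a * (1 / ln y)) \<longlongrightarrow> 1 - ln a * 0) at_top"
      by (intro tendsto_intros h0)
    moreover have "\<forall>\<^sub>F y in at_top. 1 - ln a * (1 / ln y) = ln (y / a) / ln y"
      using eventually_gt_at_top[of "1::real"]
      by eventually_elim (use apos in \<open>auto simp: ln_div field_simps\<close>)
    ultimately show ?thesis by (simp add: tendsto_cong)
  qed
  have "((\<lambda>y. (1 / a) * ((Tsum (Qa a) (y / a) / ln (y / a)) * (ln (y / a) / ln y)))
      \<longlongrightarrow> (1 / a) * (W * 1)) at_top"
    by (intro tendsto_intros IH2 r)
  moreover have "\<forall>\<^sub>F y in at_top. (1 / a) * ((Tsum (Qa a) (y / a) / ln (y / a)) * (ln (y / a) / ln y))
      = gfun a y"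
    using eventually_gt_at_top[of "real a"]
  proof eventually_elim
    case (elim y)
    then have "y / a > 1" using apos by (simp add: field_simps)
    then have l1: "ln (y / a) > 0" by simp
    have l2: "ln y > 0" using elim apos by simp
    have "(\<Sum>n\<in>{n \<in> Lset a. real n \<le> y}. 1 / real n) = Tsum (Qa a) (y / a) / real a"
      using assms by (intro Lset_sum) auto
    then show ?case unfolding gfun_def using assms l1 l2 by (simp add: field_simps)
  qed
  ultimately show ?thesis using dL_Qa[of a] W_def by (simp add: tendsto_cong)
qed


lemma multiplicity_lt_self:
  assumes "prime (p::nat)" "b > 0"
  shows "multiplicity p b < b"
proof -
  define m where "m = multiplicity p b"
  have "p ^ m dvd b" unfolding m_def by (rule multiplicity_dvd)
  then have "p ^ m \<le> b" using assms by (intro dvd_imp_le) auto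
  moreover have "2 ^ m \<le> p ^ m" using assms prime_ge_2_nat by (intro power_mono) auto
  moreover have "m < 2 ^ m" by simp
  ultimately show ?thesis unfolding m_def[symmetric] by linarith
qed

lemma inv_factor_ge1: "prime p \<Longrightarrow> 1 \<le> 1 / (1 - 1 / real p)"
proof -
  assume "prime p"
  then have "real p \<ge> 2" using prime_ge_2_nat by simp
  then show ?thesis by (simp add: field_simps)
qed

lemma Tsum_Qa_bound:
  assumes a: "a > 1" and y: "y \<ge> 0"
  shows "Tsum (Qa a) y \<le> (\<Prod>p\<in>{p. prime p \<and> gpf a \<le> p \<and> real p \<le> y}. 1 / (1 - 1 / real p))"
proof -
  define Q' where "Q' = {p. prime p \<and> gpf a \<le> p \<and> real p \<le> y}"
  have finQ: "finite Q'" unfolding Q'_def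
    by (rule finite_subset[OF _ finite_primes_le_real[of y]]) auto
  define K where "K = nat \<lfloor>y\<rfloor> + 1"
  have sub: "Sset (Qa a) y \<subseteq> Msm Q' K"
  proof
    fix b assume b: "b \<in> Sset (Qa a) y"
    have bpos: "b > 0" and bley: "real b \<le> y" and rough: "\<forall>q\<in>Qa a. \<not> q dvd b"
      using b by (auto simp: Sset_def)
    have bK: "b < K" using bley unfolding K_def by linarith
    show "b \<in> Msm Q' K"
      unfolding Msm_def
    proof (intro CollectI conjI allI impI ballI bpos)
      fix p assume p: "prime p \<and> p dvd b"
      then have "p \<le> b" using bpos by (intro dvd_imp_le) auto
      then have "real p \<le> y" using bley by linarith
      moreover have "gpf a \<le> p" using p rough rough_iff[of b a] by blast
      ultimately show "p \<in> Q'" using p by (simp add: Q'_def)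
    next
      fix p assume "p \<in> Q'"
      then have "prime p" by (simp add: Q'_def)
      then show "multiplicity p b < K" using multiplicity_lt_self[of p b] bpos bK by linarith
    qed
  qed
  have "Tsum (Qa a) y = (\<Sum>n\<in>Sset (Qa a) y. 1 / real n)" by (rule Tsum_Sset)
  also have "\<dots> \<le> (\<Prod>p\<in>Q'. 1 / (1 - 1 / real p))"
  proof (rule euler_upper[OF finQ _ _ _ _ _ sub])
    show "\<forall>p\<in>Q'. prime p" by (simp add: Q'_def)
    show "\<And>m n. 1 / real (m * n) = 1 / real m * (1 / real n)" by simp
    show "1 / real (1::nat) = 1" by simp
    show "\<And>n. 0 \<le> 1 / real n" by simp
    fix p assume "p \<in> Q'"
    then have "real p \<ge> 2" using prime_ge_2_nat by (simp add: Q'_def)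
    then show "1 / real p < 1" by simp
  qed
  finally show ?thesis unfolding Q'_def .
qed

lemma gfun_bound:
  assumes a: "a > 1" and x: "x \<ge> 2"
  shows "0 \<le> gfun a x" "gfun a x \<le> 3 * exp 4 * dL a"
proof -
  have lnx: "ln x > 0" using x by simp
  show "0 \<le> gfun a x" unfolding gfun_def using lnx by (intro mult_nonneg_nonneg sum_nonneg) auto
  show "gfun a x \<le> 3 * exp 4 * dL a"
  proof (cases "real a \<le> x")
    case False
    then have e: "{n \<in> Lset a. real n \<le> x} = {}" using Lset_ge by force
    have "gfun a x = 0" unfolding gfun_def e by simp
    then show ?thesis using dL_nonneg[of a] by simp
  next
    case True
    define W where "W = (\<Prod>p\<in>Qa a. 1 - 1 / real p)"
    have W0: "W \<ge> 0" unfolding W_def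
    proof (intro prod_nonneg)
      fix p assume "p \<in> Qa a"
      then have "real p \<ge> 2" using prime_ge_2_nat by (simp add: Qa_def)
      then show "0 \<le> 1 - 1 / real p" by simp
    qed
    have apos: "real a > 1" using a by simp
    define y where "y = x / real a"
    have y0: "y \<ge> 0" using x apos by (simp add: y_def)
    define Q' where "Q' = {p. prime p \<and> gpf a \<le> p \<and> real p \<le> y}"
    define Q'' where "Q'' = {p. prime p \<and> gpf a \<le> p \<and> real p \<le> x}"
    have finQ'': "finite Q''" unfolding Q''_def
      by (rule finite_subset[OF _ finite_primes_le_real[of x]]) auto
    have "y \<le> x" using x apos by (simp add: y_def field_simps)
    then have subQ: "Q' \<subseteq> Q''" by (auto simp: Q'_def Q''_def)
    have T1: "Tsum (Qa a) y \<le> (\<Prod>p\<in>Q'. 1 / (1 - 1 / real p))"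
      unfolding Q'_def by (rule Tsum_Qa_bound[OF a y0])
    also have "\<dots> \<le> (\<Prod>p\<in>Q''. 1 / (1 - 1 / real p))"
    proof (rule prod_mono2[OF finQ'' subQ])
      fix b assume "b \<in> Q'' - Q'"
      then show "1 \<le> 1 / (1 - 1 / real b)" by (intro inv_factor_ge1) (simp add: Q''_def)
    next
      fix b assume "b \<in> Q'"
      then have "prime b" by (simp add: Q'_def)
      then show "0 \<le> 1 / (1 - 1 / real b)" using inv_factor_ge1[of b] by linarith
    qed
    also have "\<dots> = W * Pi_m x"
    proof -
      have ga: "real (gpf a) \<le> x" using gpf_props(4)[OF a] True by linarith
      have split: "{p. prime p \<and> real p \<le> x} = Qa a \<union> Q''"
        using ga by (auto simp: Qa_def Q''_def)
      have disj: "Qa a \<inter> Q'' = {}" by (auto simp: Qa_def Q''_def)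
      have "Pi_m x = (\<Prod>p\<in>Qa a. 1 / (1 - 1 / real p)) * (\<Prod>p\<in>Q''. 1 / (1 - 1 / real p))"
        unfolding Pi_m_def split by (rule prod.union_disjoint[OF Qa_finite finQ'' disj])
      moreover have "W * (\<Prod>p\<in>Qa a. 1 / (1 - 1 / real p)) = 1"
      proof -
        have "W * (\<Prod>p\<in>Qa a. 1 / (1 - 1 / real p)) = (\<Prod>p\<in>Qa a. (1 - 1 / real p) * (1 / (1 - 1 / real p)))"
          unfolding W_def by (rule prod.distrib[symmetric])
        also have "\<dots> = (\<Prod>p\<in>Qa a. 1)"
        proof (rule prod.cong[OF refl])
          fix p assume "p \<in> Qa a"
          then have "real p \<ge> 2" using prime_ge_2_nat by (simp add: Qa_def)
          then show "(1 - 1 / real p) * (1 / (1 - 1 / real p)) = 1" by (simp add: field_simps)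
        qed
        finally show ?thesis by simp
      qed
      ultimately show ?thesis by (simp add: algebra_simps)
    qed
    also have "\<dots> \<le> W * (exp 4 * (1 + ln x))"
      using mertens[OF x] W0 by (intro mult_left_mono) auto
    finally have T: "Tsum (Qa a) y \<le> W * (exp 4 * (1 + ln x))" .
    have "gfun a x = (1 / ln x) * (Tsum (Qa a) y / real a)"
      unfolding gfun_def y_def using a by (subst Lset_sum) auto
    also have "\<dots> \<le> (1 / ln x) * (W * (exp 4 * (1 + ln x)) / real a)"
      using T lnx apos by (intro mult_left_mono divide_right_mono) auto
    also have "\<dots> = dL a * exp 4 * ((1 + ln x) / ln x)"
      unfolding dL_Qa W_def[symmetric] using lnx apos by (simp add: field_simps)
    also have "\<dots> \<le> dL a * exp 4 * 3"
    proof (intro mult_left_mono)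
      have "ln 2 \<ge> (2/3::real)" by (rule ln2_ge_two_thirds)
      moreover have "ln 2 \<le> ln x" using x by simp
      ultimately show "(1 + ln x) / ln x \<le> 3" using lnx by (simp add: field_simps)
      show "0 \<le> dL a * exp 4" using dL_nonneg[of a] by simp
    qed
    finally show ?thesis by (simp add: mult.commute mult.left_commute)
  qed
qed


lemma mult_mult:
  assumes "prime (p::nat)" "x > 0" "y > 0"
  shows "multiplicity p (x * y) = multiplicity p x + multiplicity p y"
  using assms by (intro prime_elem_multiplicity_mult_distrib) auto

lemma Lset_key:
  assumes a: "a > 1" "a' > 1" and n: "n \<in> Lset a" "n \<in> Lset a'"
    and le: "gpf a \<le> gpf a'"
    and eqc: "gpf a = gpf a' \<longrightarrow> multiplicity (gpf a) a \<le> multiplicity (gpf a) a'"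
  shows "a' \<in> Lset a"
proof -
  define P where "P = gpf a"
  define P' where "P' = gpf a'"
  obtain b where b: "n = b * a" "b \<ge> 1" "\<forall>p. prime p \<and> p dvd b \<longrightarrow> p \<ge> P"
    using n(1) unfolding Lset_def P_def by blast
  obtain b' where b': "n = b' * a'" "b' \<ge> 1" "\<forall>p. prime p \<and> p dvd b' \<longrightarrow> p \<ge> P'"
    using n(2) unfolding Lset_def P'_def by blast
  have apos: "a > 0" "a' > 0" using a by auto
  have vn: "multiplicity p n = multiplicity p b + multiplicity p a"
           "multiplicity p n = multiplicity p b' + multiplicity p a'" if "prime p" for p
  proof -
    have "b > 0" "b' > 0" using b b' by auto
    then show "multiplicity p n = multiplicity p b + multiplicity p a"
           "multiplicity p n = multiplicity p b' + multiplicity p a'"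
      using mult_mult[OF that, of b a] mult_mult[OF that, of b' a'] apos b(1) b'(1) by auto
  qed
  have small: "multiplicity p a = multiplicity p a'" if p: "prime p" "p < P" for p
  proof -
    have "\<not> p dvd b"
    proof
      assume "p dvd b" then have "P \<le> p" using b(3) p(1) by blast
      then show False using p(2) by simp
    qed
    moreover have "\<not> p dvd b'"
    proof
      assume "p dvd b'" then have "P' \<le> p" using b'(3) p(1) by blast
      then show False using p(2) le unfolding P_def P'_def by simp
    qed
    ultimately show ?thesis using vn[OF p(1)] by (simp add: not_dvd_imp_multiplicity_0)
  qed
  have le_all: "multiplicity p a \<le> multiplicity p a'" if p: "prime p" for p
  proof (cases "p < P")
    case True then show ?thesis using small p by simp
  next
    case False
    show ?thesis
    proof (cases "p = P")
      case True
      show ?thesis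
      proof (cases "P = P'")
        case True then show ?thesis using eqc \<open>p = P\<close> unfolding P_def P'_def by simp
      next
        case False
        then have "P < P'" using le unfolding P_def P'_def by simp
        have "\<not> p dvd b'"
        proof
          assume "p dvd b'" then have "P' \<le> p" using b'(3) p by blast
          then show False using \<open>P < P'\<close> \<open>p = P\<close> by simp
        qed
        then have "multiplicity p a' = multiplicity p n" using vn[OF p] by (simp add: not_dvd_imp_multiplicity_0)
        then show ?thesis using vn[OF p] by simp
      qed
    next
      case False
      then have "p > P" using \<open>\<not> p < P\<close> by simp
      have "\<not> p dvd a"
      proof
        assume "p dvd a" then have "p \<le> P" using gpf_props(3)[OF a(1), of p] p unfolding P_def by blast
        then show False using \<open>p > P\<close> by simp
      qed
      then show ?thesis by (simp add: not_dvd_imp_multiplicity_0)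
    qed
  qed
  have "a dvd a'" by (rule multiplicity_le_imp_dvd) (use apos le_all in auto)
  then obtain c where c: "a' = c * a" by (auto simp: dvd_def mult.commute)
  have "c \<noteq> 0" using c apos by (intro notI) simp
  then have cpos: "c \<ge> 1" by simp
  have rough: "\<forall>p. prime p \<and> p dvd c \<longrightarrow> p \<ge> P"
  proof (intro allI impI)
    fix p assume p: "prime p \<and> p dvd c"
    show "p \<ge> P"
    proof (rule ccontr)
      assume "\<not> p \<ge> P"
      then have "p < P" by simp
      then have "multiplicity p a = multiplicity p a'" using small p by blast
      moreover have "multiplicity p a' = multiplicity p c + multiplicity p a"
        using c cpos apos p by (simp add: mult_mult)
      moreover have "multiplicity p c > 0" using p cpos prime_multiplicity_gt_zero_iff[of p c] by simp
      ultimately show False by simp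
    qed
  qed
  show ?thesis unfolding Lset_def using c cpos rough P_def by blast
qed

lemma Lset_disjoint:
  assumes A: "\<forall>a\<in>A. a > 1" and prim: "L_primitive A"
    and aa: "a \<in> A" "a' \<in> A" "a \<noteq> a'"
  shows "Lset a \<inter> Lset a' = {}"
proof (rule ccontr)
  assume "Lset a \<inter> Lset a' \<noteq> {}"
  then obtain n where n: "n \<in> Lset a" "n \<in> Lset a'" by blast
  have a1: "a > 1" "a' > 1" using A aa by auto
  have na: "a' \<notin> Lset a" "a \<notin> Lset a'" using prim aa unfolding L_primitive_def by auto
  consider "gpf a < gpf a'" | "gpf a' < gpf a"
    | "gpf a = gpf a'" "multiplicity (gpf a) a \<le> multiplicity (gpf a) a'"
    | "gpf a = gpf a'" "multiplicity (gpf a) a' \<le> multiplicity (gpf a) a" by linarith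
  then show False
  proof cases
    case 1 then show ?thesis using Lset_key[OF a1 n] na by simp
  next
    case 2 then show ?thesis using Lset_key[OF a1(2,1) n(2,1)] na by simp
  next
    case 3 then show ?thesis using Lset_key[OF a1 n] na by simp
  next
    case 4 then show ?thesis using Lset_key[OF a1(2,1) n(2,1)] na by simp
  qed
qed


lemma finite_Ax: "finite {a::nat\<in>A. real a \<le> x}"
  by (rule finite_subset[of _ "{..nat \<lfloor>x\<rfloor>}"]) (auto simp: le_nat_floor)

lemma tannery_part:
  fixes g :: "nat \<Rightarrow> real \<Rightarrow> real" and d :: "nat \<Rightarrow> real"
  assumes hs: "(d has_sum S) A"
    and lim: "\<And>a. a \<in> A \<Longrightarrow> (g a \<longlongrightarrow> d a) at_top"
    and bnd: "\<And>a x. a \<in> A \<Longrightarrow> x \<ge> 2 \<Longrightarrow> 0 \<le> g a x \<and> g a x \<le> C * d a"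
    and C: "C \<ge> 0"
  shows "((\<lambda>x. \<Sum>a\<in>{a\<in>A. real a \<le> x}. g a x) \<longlongrightarrow> S) at_top"
proof (rule tendstoI)
  fix \<epsilon> :: real assume eps: "\<epsilon> > 0"
  define e where "e = \<epsilon> / (2 * C + 3)"
  have e: "e > 0" using eps C by (simp add: e_def)
  have "(sum d \<longlongrightarrow> S) (finite_subsets_at_top A)" using hs by (simp add: has_sum_def)
  from tendstoD[OF this e] obtain F where F: "finite F" "F \<subseteq> A"
    and FY: "\<And>Y. finite Y \<Longrightarrow> F \<subseteq> Y \<Longrightarrow> Y \<subseteq> A \<Longrightarrow> dist (sum d Y) S < e"
    unfolding eventually_finite_subsets_at_top by metis
  have limF: "((\<lambda>x. \<Sum>a\<in>F. g a x) \<longlongrightarrow> sum d F) at_top"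
    using F by (intro tendsto_sum lim) auto
  have ev1: "\<forall>\<^sub>F x in at_top. dist (\<Sum>a\<in>F. g a x) (sum d F) < e"
    using tendstoD[OF limF e] .
  have ev2: "\<forall>\<^sub>F x in at_top. x \<ge> (2::real)" by (rule eventually_ge_at_top)
  have ev3: "\<forall>\<^sub>F x in at_top. x \<ge> real (Max (insert 0 F))" by (rule eventually_ge_at_top)
  show "\<forall>\<^sub>F x in at_top. dist (\<Sum>a\<in>{a\<in>A. real a \<le> x}. g a x) S < \<epsilon>"
    using ev1 ev2 ev3
  proof eventually_elim
    case (elim x)
    define Ax where "Ax = {a\<in>A. real a \<le> x}"
    have finAx: "finite Ax" unfolding Ax_def by (rule finite_Ax)
    have FAx: "F \<subseteq> Ax"
    proof
      fix a assume a: "a \<in> F"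
      then have "a \<le> Max (insert 0 F)" using F by simp
      then have "real a \<le> x" using elim(3) by (meson of_nat_le_iff order_trans)
      then show "a \<in> Ax" using a F by (auto simp: Ax_def)
    qed
    have AxA: "Ax \<subseteq> A" by (auto simp: Ax_def)
    have split_g: "(\<Sum>a\<in>Ax. g a x) = (\<Sum>a\<in>Ax - F. g a x) + (\<Sum>a\<in>F. g a x)"
      by (rule sum.subset_diff[OF FAx finAx])
    have split_d: "(\<Sum>a\<in>Ax. d a) = (\<Sum>a\<in>Ax - F. d a) + (\<Sum>a\<in>F. d a)"
      by (rule sum.subset_diff[OF FAx finAx])
    have r0: "0 \<le> (\<Sum>a\<in>Ax - F. g a x)"
      using bnd AxA elim(2) by (intro sum_nonneg) auto
    have r1: "(\<Sum>a\<in>Ax - F. g a x) \<le> (\<Sum>a\<in>Ax - F. C * d a)"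
      using bnd AxA elim(2) by (intro sum_mono) auto
    have dAx: "dist (sum d Ax) S < e" using FY[OF finAx FAx AxA] .
    have dF: "dist (sum d F) S < e" using FY[OF F(1) order.refl F(2)] .
    have "(\<Sum>a\<in>Ax - F. d a) < 2 * e" using dAx dF split_d by (simp add: dist_real_def abs_less_iff)
    then have "C * (\<Sum>a\<in>Ax - F. d a) \<le> C * (2 * e)" using C by (intro mult_left_mono) auto
    then have r2: "(\<Sum>a\<in>Ax - F. g a x) \<le> C * (2 * e)" using r1 by (simp add: sum_distrib_left)
    have "dist (\<Sum>a\<in>Ax. g a x) S \<le> dist (\<Sum>a\<in>F. g a x) (sum d F) + (\<Sum>a\<in>Ax - F. g a x) + dist (sum d F) S"
      using split_g r0 by (simp add: dist_real_def)
    also have "\<dots> < e + C * (2 * e) + e" using elim(1) r2 dF by linarith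
    also have "\<dots> \<le> \<epsilon>"
    proof -
      have "(2 * C + 3) * e = \<epsilon>" using C by (simp add: e_def)
      moreover have "e + C * (2 * e) + e = (2 * C + 3) * e - e" by (simp add: algebra_simps)
      ultimately show ?thesis using e by linarith
    qed
    finally show ?case unfolding Ax_def .
  qed
qed


theorem lemma6p2:
  fixes A :: "nat set"
  assumes "\<forall>a\<in>A. a > 1"
    and "L_primitive A"
  shows "\<exists>S. (dL has_sum S) A \<and>
           ((\<lambda>x::real. (1 / ln x) * (\<Sum>n\<in>{n\<in>LsetA A. real n \<le> x}. 1 / real n))
              \<longlongrightarrow> S) at_top"
proof -
  have A1: "\<And>a. a \<in> A \<Longrightarrow> a > 1" using assms(1) by blast
  have disj: "\<And>a a'. a \<in> A \<Longrightarrow> a' \<in> A \<Longrightarrow> a \<noteq> a' \<Longrightarrow> Lset a \<inter> Lset a' = {}"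
    using Lset_disjoint[OF assms(1) assms(2)] by blast
  have usum: "(\<Sum>a\<in>F. gfun a x) = (1 / ln x) * (\<Sum>n\<in>(\<Union>a\<in>F. {n \<in> Lset a. real n \<le> x}). 1 / real n)"
    if F: "F \<subseteq> A" "finite F" for F x
  proof -
    have "(\<Sum>n\<in>(\<Union>a\<in>F. {n \<in> Lset a. real n \<le> x}). 1 / real n)
        = (\<Sum>a\<in>F. \<Sum>n\<in>{n \<in> Lset a. real n \<le> x}. 1 / real n)"
    proof (rule sum.UNION_disjoint[OF F(2)])
      show "\<forall>i\<in>F. finite {n \<in> Lset i. real n \<le> x}" by (simp add: finite_Lset_le)
      show "\<forall>i\<in>F. \<forall>j\<in>F. i \<noteq> j \<longrightarrow> {n \<in> Lset i. real n \<le> x} \<inter> {n \<in> Lset j. real n \<le> x} = {}"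
      proof (intro ballI impI)
        fix i j assume "i \<in> F" "j \<in> F" "i \<noteq> j"
        then have "Lset i \<inter> Lset j = {}" using disj F(1) by blast
        then show "{n \<in> Lset i. real n \<le> x} \<inter> {n \<in> Lset j. real n \<le> x} = {}" by blast
      qed
    qed
    then show ?thesis unfolding gfun_def by (simp add: sum_distrib_left)
  qed
  have Geq: "(1 / ln x) * (\<Sum>n\<in>{n\<in>LsetA A. real n \<le> x}. 1 / real n) = (\<Sum>a\<in>{a\<in>A. real a \<le> x}. gfun a x)"
    for x :: real
  proof -
    have "{n\<in>LsetA A. real n \<le> x} = (\<Union>a\<in>{a\<in>A. real a \<le> x}. {n \<in> Lset a. real n \<le> x})"
    proof (intro equalityI subsetI)
      fix n assume "n \<in> {n\<in>LsetA A. real n \<le> x}"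
      then obtain a where a: "a \<in> A" "n \<in> Lset a" "real n \<le> x" by (auto simp: LsetA_def)
      then have "real a \<le> x" using Lset_ge[OF a(2)] by linarith
      then show "n \<in> (\<Union>a\<in>{a\<in>A. real a \<le> x}. {n \<in> Lset a. real n \<le> x})" using a by blast
    qed (auto simp: LsetA_def)
    then show ?thesis using usum[of "{a\<in>A. real a \<le> x}" x] finite_Ax[of A x] by auto
  qed
  have bounded: "sum dL F \<le> 1" if F: "F \<subseteq> A" "finite F" for F
  proof -
    have lim1: "((\<lambda>x. \<Sum>a\<in>F. gfun a x) \<longlongrightarrow> sum dL F) at_top"
      using F A1 by (intro tendsto_sum gfun_lim) auto
    have "((\<lambda>x::real. inverse (ln x)) \<longlongrightarrow> 0) at_top"
      by (rule tendsto_inverse_0_at_top[OF ln_at_top])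
    then have h0: "((\<lambda>y::real. 1 / ln y) \<longlongrightarrow> 0) at_top" by (simp add: inverse_eq_divide)
    have "((\<lambda>y::real. 1 + 1 / ln y) \<longlongrightarrow> 1 + (0::real)) at_top" by (intro tendsto_add tendsto_const h0)
    then have lim2: "((\<lambda>y::real. 1 + 1 / ln y) \<longlongrightarrow> (1::real)) at_top" by simp
    have ev: "\<forall>\<^sub>F x in at_top. (\<Sum>a\<in>F. gfun a x) \<le> 1 + 1 / ln x"
      using eventually_ge_at_top[of "2::real"]
    proof eventually_elim
      case (elim x)
      have lnx: "ln x > 0" using elim by simp
      have sub: "(\<Union>a\<in>F. {n \<in> Lset a. real n \<le> x}) \<subseteq> Sset {} x"
      proof
        fix n assume "n \<in> (\<Union>a\<in>F. {n \<in> Lset a. real n \<le> x})"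
        then obtain a where a: "a \<in> F" "n \<in> Lset a" "real n \<le> x" by blast
        have "a > 1" using a F A1 by blast
        then have "n > 0" using Lset_ge[OF a(2)] by simp
        then show "n \<in> Sset {} x" using a by (simp add: Sset_def)
      qed
      have "(\<Sum>n\<in>(\<Union>a\<in>F. {n \<in> Lset a. real n \<le> x}). 1 / real n) \<le> (\<Sum>n\<in>Sset {} x. 1 / real n)"
        by (intro sum_mono2 finite_Sset sub) auto
      also have "\<dots> = Tsum {} x" by (simp add: Tsum_Sset)
      also have "\<dots> \<le> 1 + ln x" using Tsum_empty_bounds(2)[of x] elim by simp
      finally have "(1 / ln x) * (\<Sum>n\<in>(\<Union>a\<in>F. {n \<in> Lset a. real n \<le> x}). 1 / real n) \<le> (1 / ln x) * (1 + ln x)"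
        using lnx by (intro mult_left_mono) auto
      also have "\<dots> = 1 + 1 / ln x" using lnx by (simp add: field_simps)
      finally show ?case using usum[OF F] by simp
    qed
    show ?thesis by (rule tendsto_le[OF trivial_limit_at_top_linorder lim2 lim1 ev])
  qed
  have summ: "dL summable_on A"
  proof (rule nonneg_bdd_above_summable_on)
    show "\<And>x. x \<in> A \<Longrightarrow> 0 \<le> dL x" by (rule dL_nonneg)
    show "bdd_above (sum dL ` {F. F \<subseteq> A \<and> finite F})"
      using bounded by (intro bdd_aboveI[of _ 1]) auto
  qed
  define S where "S = infsum dL A"
  have hs: "(dL has_sum S) A" unfolding S_def using summ by (rule has_sum_infsum)
  have "((\<lambda>x. \<Sum>a\<in>{a\<in>A. real a \<le> x}. gfun a x) \<longlongrightarrow> S) at_top"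
  proof (rule tannery_part[OF hs])
    show "\<And>a. a \<in> A \<Longrightarrow> (gfun a \<longlongrightarrow> dL a) at_top" using A1 gfun_lim by blast
    show "\<And>a x. a \<in> A \<Longrightarrow> x \<ge> 2 \<Longrightarrow> 0 \<le> gfun a x \<and> gfun a x \<le> (3 * exp 4) * dL a"
      using A1 gfun_bound by blast
    show "0 \<le> 3 * exp (4::real)" by simp
  qed
  then have "((\<lambda>x::real. (1 / ln x) * (\<Sum>n\<in>{n\<in>LsetA A. real n \<le> x}. 1 / real n)) \<longlongrightarrow> S) at_top"
    unfolding Geq .
  then show ?thesis using hs by blast
qed


end
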